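(* The set $\{\mathcal A_p\mid p \text{ a prime number}\}$, the variety $\mathcal{SL}$ and the variety $\mathcal{ZM}$ are each definable in $\mathbf{Com}$.
   Context: $\mathbf{Com}$ denotes the lattice of all commutative semigroup varieties with join $\vee$ and meet $\wedge$; a subset (or element) of a lattice $L$ is definable in $L$ if it is the set of elements satisfying some first-order formula with one free variable in the language $\{\vee,\wedge\}$. $\operatorname{var}\Sigma$ denotes the variety defined by identities $\Sigma$; $w=0$ (with $x$ not occurring in $w$) stands for $wx=xw=w$. $\mathcal A_n=\operatorname{var}\{x^ny=y,\ xy=yx\}$, $\mathcal{SL}=\operatorname{var}\{x^2=x,\ xy=yx\}$ (semilattices), $\mathcal{ZM}=\operatorname{var}\{xy=0\}$ (null semigroups). *)

theory Defs
  imports Main "HOL-Library.Multiset" "HOL-Computational_Algebra.Primes"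
begin

text \<open>Elements of the free commutative semigroup on countably many letters
  x_0, x_1, ...: nonempty finite multisets of variable indices; product is
  multiset sum.\<close>

definition cwords :: "nat multiset set" where
  "cwords = {w. w \<noteq> {#}}"

definition subst_word :: "(nat \<Rightarrow> nat multiset) \<Rightarrow> nat multiset \<Rightarrow> nat multiset" where
  "subst_word \<sigma> w = sum_mset (image_mset \<sigma> w)"

text \<open>Equational theories of commutative semigroup varieties =
  fully invariant congruences on the free commutative semigroup.\<close>
definition is_eq_theory :: "(nat multiset \<times> nat multiset) set \<Rightarrow> bool" where
  "is_eq_theory T \<longleftrightarrow>
     T \<subseteq> cwords \<times> cwords \<and>
     (\<forall>w\<in>cwords. (w, w) \<in> T) \<and>
     (\<forall>a b. (a, b) \<in> T \<longrightarrow> (b, a) \<in> T) \<and>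
     (\<forall>a b c. (a, b) \<in> T \<longrightarrow> (b, c) \<in> T \<longrightarrow> (a, c) \<in> T) \<and>
     (\<forall>a b c. (a, b) \<in> T \<longrightarrow> c \<in> cwords \<longrightarrow> (a + c, b + c) \<in> T) \<and>
     (\<forall>\<sigma> a b. (\<forall>i. \<sigma> i \<in> cwords) \<longrightarrow> (a, b) \<in> T \<longrightarrow>
                 (subst_word \<sigma> a, subst_word \<sigma> b) \<in> T)"

text \<open>A commutative semigroup variety is represented by its equational theory.
  var Sigma (together with xy = yx, which is built in) is represented by the
  equational theory generated by Sigma.\<close>
definition var_of :: "(nat multiset \<times> nat multiset) set \<Rightarrow> (nat multiset \<times> nat multiset) set" where
  "var_of \<Sigma> = \<Inter> {T. is_eq_theory T \<and> \<Sigma> \<subseteq> T}"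

text \<open>The lattice Com: carrier = all commutative semigroup varieties (as theories);
  join of varieties = intersection of theories, meet of varieties = theory
  generated by the union of the theories.\<close>
definition Com :: "(nat multiset \<times> nat multiset) set set" where
  "Com = {T. is_eq_theory T}"

definition com_join :: "(nat multiset \<times> nat multiset) set \<Rightarrow> (nat multiset \<times> nat multiset) set \<Rightarrow> (nat multiset \<times> nat multiset) set" where
  "com_join V W = V \<inter> W"

definition com_meet :: "(nat multiset \<times> nat multiset) set \<Rightarrow> (nat multiset \<times> nat multiset) set \<Rightarrow> (nat multiset \<times> nat multiset) set" where
  "com_meet V W = var_of (V \<union> W)"

text \<open>x = x_0, y = x_1, z = x_2.\<close>

definition A_var :: "nat \<Rightarrow> (nat multiset \<times> nat multiset) set" where
  "A_var n = var_of {(replicate_mset n 0 + {#1#}, {#1#})}"   (* x^n y = y *)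

definition SL_var :: "(nat multiset \<times> nat multiset) set" where
  "SL_var = var_of {({#0, 0#}, {#0#})}"                      (* x^2 = x *)

definition ZM_var :: "(nat multiset \<times> nat multiset) set" where
  "ZM_var = var_of {({#0, 1, 2#}, {#0, 1#})}"                (* xy = 0, i.e. xyz = zxy = xy *)

datatype lterm = LVar nat | LJoin lterm lterm | LMeet lterm lterm

datatype lform =
    FEq lterm lterm
  | FNot lform
  | FAnd lform lform
  | FOr lform lform
  | FEx nat lform
  | FAll nat lform

fun tvars :: "lterm \<Rightarrow> nat set" where
  "tvars (LVar i) = {i}"
| "tvars (LJoin s t) = tvars s \<union> tvars t"
| "tvars (LMeet s t) = tvars s \<union> tvars t"

fun fvars :: "lform \<Rightarrow> nat set" where
  "fvars (FEq s t) = tvars s \<union> tvars t"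
| "fvars (FNot f) = fvars f"
| "fvars (FAnd f g) = fvars f \<union> fvars g"
| "fvars (FOr f g) = fvars f \<union> fvars g"
| "fvars (FEx i f) = fvars f - {i}"
| "fvars (FAll i f) = fvars f - {i}"

fun teval :: "('a \<Rightarrow> 'a \<Rightarrow> 'a) \<Rightarrow> ('a \<Rightarrow> 'a \<Rightarrow> 'a) \<Rightarrow> (nat \<Rightarrow> 'a) \<Rightarrow> lterm \<Rightarrow> 'a" where
  "teval J M e (LVar i) = e i"
| "teval J M e (LJoin s t) = J (teval J M e s) (teval J M e t)"
| "teval J M e (LMeet s t) = M (teval J M e s) (teval J M e t)"

fun fsat :: "'a set \<Rightarrow> ('a \<Rightarrow> 'a \<Rightarrow> 'a) \<Rightarrow> ('a \<Rightarrow> 'a \<Rightarrow> 'a) \<Rightarrow> (nat \<Rightarrow> 'a) \<Rightarrow> lform \<Rightarrow> bool" where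
  "fsat L J M e (FEq s t) = (teval J M e s = teval J M e t)"
| "fsat L J M e (FNot f) = (\<not> fsat L J M e f)"
| "fsat L J M e (FAnd f g) = (fsat L J M e f \<and> fsat L J M e g)"
| "fsat L J M e (FOr f g) = (fsat L J M e f \<or> fsat L J M e g)"
| "fsat L J M e (FEx i f) = (\<exists>a\<in>L. fsat L J M (e(i := a)) f)"
| "fsat L J M e (FAll i f) = (\<forall>a\<in>L. fsat L J M (e(i := a)) f)"

definition definable :: "'a set \<Rightarrow> ('a \<Rightarrow> 'a \<Rightarrow> 'a) \<Rightarrow> ('a \<Rightarrow> 'a \<Rightarrow> 'a) \<Rightarrow> 'a set \<Rightarrow> bool" where
  "definable L J M S \<longleftrightarrow> S \<subseteq> L \<and>
     (\<exists>\<phi>. fvars \<phi> \<subseteq> {0} \<and>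
        (\<forall>e. (\<forall>i. e i \<in> L) \<longrightarrow> (fsat L J M e \<phi> \<longleftrightarrow> e 0 \<in> S)))"

end

theory Submission
  imports Defs
begin


abbreviation X :: "nat multiset" where "X \<equiv> {#0#}"
abbreviation Y :: "nat multiset" where "Y \<equiv> {#1#}"
definition Fth :: "(nat multiset \<times> nat multiset) set" where "Fth = cwords \<times> cwords"

lemma cwords_iff[simp]: "w \<in> cwords \<longleftrightarrow> w \<noteq> {#}" by (simp add: cwords_def)

lemma subst_empty[simp]: "subst_word \<sigma> {#} = {#}"
  by (simp add: subst_word_def)
lemma subst_add_mset[simp]: "subst_word \<sigma> (add_mset i u) = \<sigma> i + subst_word \<sigma> u"
  by (simp add: subst_word_def)
lemma subst_plus[simp]: "subst_word \<sigma> (u + v) = subst_word \<sigma> u + subst_word \<sigma> v"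
  by (simp add: subst_word_def)
lemma subst_replicate[simp]: "subst_word \<sigma> (replicate_mset k i) = repeat_mset k (\<sigma> i)"
  by (induction k) auto
lemma subst_repeat[simp]: "subst_word \<sigma> (repeat_mset k u) = repeat_mset k (subst_word \<sigma> u)"
  by (induction k) auto
lemma subst_ne: "(\<forall>i. \<sigma> i \<noteq> {#}) \<Longrightarrow> u \<noteq> {#} \<Longrightarrow> subst_word \<sigma> u \<noteq> {#}"
  by (induction u) auto
lemma subst_two: "subst_word (\<lambda>k. if k = i then w1 else w2) u
   = repeat_mset (count u i) w1 + repeat_mset (size u - count u i) w2"
proof (induction u)
  case empty then show ?case by simp
next
  case (add x u)
  have "count u i \<le> size u" by (simp add: count_le_size)
  then show ?case using add by (auto simp: Suc_diff_le)
qed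
lemma subst_const: "subst_word (\<lambda>k. w) u = repeat_mset (size u) w"
  by (induction u) auto
lemma set_subst: "set_mset (subst_word \<sigma> u) = (\<Union>i\<in>set_mset u. set_mset (\<sigma> i))"
  by (induction u) auto
lemma size_subst: "(\<forall>i. \<sigma> i \<noteq> {#}) \<Longrightarrow> size u \<le> size (subst_word \<sigma> u)"
proof (induction u)
  case empty then show ?case by simp
next
  case (add x u)
  have "size (\<sigma> x) \<ge> 1" using add.prems by (simp add: Suc_leI nonempty_has_size)
  then show ?case using add by simp
qed

section \<open>Equational theories\<close>

lemma eqT_ne: assumes "is_eq_theory T" "(a,b) \<in> T" shows "a \<noteq> {#} \<and> b \<noteq> {#}"
proof -
  have "T \<subseteq> cwords \<times> cwords" using assms(1) unfolding is_eq_theory_def by (elim conjE) assumption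
  then show ?thesis using assms(2) by auto
qed
lemma eqT_refl: assumes "is_eq_theory T" "w \<noteq> {#}" shows "(w,w) \<in> T"
proof -
  have "\<forall>w\<in>cwords. (w, w) \<in> T" using assms(1) unfolding is_eq_theory_def by (elim conjE) assumption
  then show ?thesis using assms(2) by auto
qed
lemma eqT_sym: assumes "is_eq_theory T" "(a,b) \<in> T" shows "(b,a) \<in> T"
proof -
  have "\<forall>a b. (a, b) \<in> T \<longrightarrow> (b, a) \<in> T" using assms(1) unfolding is_eq_theory_def by (elim conjE) assumption
  then show ?thesis using assms(2) by blast
qed
lemma eqT_trans: assumes "is_eq_theory T" "(a,b) \<in> T" "(b,c) \<in> T" shows "(a,c) \<in> T"
proof -
  have "\<forall>a b c. (a, b) \<in> T \<longrightarrow> (b, c) \<in> T \<longrightarrow> (a, c) \<in> T" using assms(1) unfolding is_eq_theory_def by (elim conjE) assumption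
  then show ?thesis using assms(2,3) by blast
qed
lemma eqT_addR: assumes "is_eq_theory T" "(a,b) \<in> T" "c \<noteq> {#}" shows "(a+c,b+c) \<in> T"
proof -
  have "\<forall>a b c. (a, b) \<in> T \<longrightarrow> c \<in> cwords \<longrightarrow> (a + c, b + c) \<in> T" using assms(1) unfolding is_eq_theory_def by (elim conjE) assumption
  then show ?thesis using assms(2,3) by simp
qed
lemma eqT_addL: "is_eq_theory T \<Longrightarrow> (a,b) \<in> T \<Longrightarrow> c \<noteq> {#} \<Longrightarrow> (c+a,c+b) \<in> T"
  using eqT_addR[of T a b c] by (simp add: add.commute)
lemma eqT_add: assumes T: "is_eq_theory T" and h: "(a,b) \<in> T" "(c,d) \<in> T" shows "(a+c,b+d) \<in> T"
proof -
  have 1: "(a+c,b+c) \<in> T" using eqT_addR[OF T h(1)] eqT_ne[OF T h(2)] by blast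
  have 2: "(b+c,b+d) \<in> T" using eqT_addL[OF T h(2)] eqT_ne[OF T h(1)] by blast
  show ?thesis using eqT_trans[OF T 1 2] .
qed
lemma eqT_subst: assumes "is_eq_theory T" "\<forall>i. \<sigma> i \<noteq> {#}" "(a,b) \<in> T"
  shows "(subst_word \<sigma> a, subst_word \<sigma> b) \<in> T"
proof -
  have "\<forall>\<sigma> a b. (\<forall>i. \<sigma> i \<in> cwords) \<longrightarrow> (a, b) \<in> T \<longrightarrow>
                 (subst_word \<sigma> a, subst_word \<sigma> b) \<in> T" using assms(1) unfolding is_eq_theory_def by (elim conjE) assumption
  then show ?thesis using assms(2,3) by simp
qed

lemma eqT_Fth: "is_eq_theory Fth"
  unfolding is_eq_theory_def Fth_def
  by (intro conjI allI impI ballI; simp add: subst_ne)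
lemma Fth_top: "is_eq_theory T \<Longrightarrow> T \<subseteq> Fth"
  unfolding is_eq_theory_def Fth_def by auto

lemma full_xy: assumes T: "is_eq_theory T" and "(X,Y) \<in> T" shows "T = Fth"
proof
  show "T \<subseteq> Fth" using Fth_top[OF T] .
  show "Fth \<subseteq> T"
  proof
    fix p assume "p \<in> Fth"
    then obtain u v where p: "p = (u,v)" "u \<noteq> {#}" "v \<noteq> {#}" unfolding Fth_def by auto
    have "(subst_word (\<lambda>k. if k = 0 then u else v) X, subst_word (\<lambda>k. if k = 0 then u else v) Y) \<in> T"
      by (rule eqT_subst[OF T]) (use p assms in auto)
    then show "p \<in> T" using p by simp
  qed
qed

lemma full_xpy: assumes T: "is_eq_theory T" and h: "(X+Y,Y) \<in> T" shows "T = Fth"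
proof -
  have "(subst_word (\<lambda>k. if k = 0 then Y else X) (X+Y), subst_word (\<lambda>k. if k = 0 then Y else X) Y) \<in> T"
    by (rule eqT_subst[OF T]) (use h in auto)
  then have "(X+Y, X) \<in> T" by (simp add: add.commute)
  then have "(X,Y) \<in> T" using h by (meson T eqT_sym eqT_trans)
  then show ?thesis using full_xy T by blast
qed

lemma var_of_eqI: assumes "is_eq_theory A" "\<Sigma> \<subseteq> A"
  "\<And>T. is_eq_theory T \<Longrightarrow> \<Sigma> \<subseteq> T \<Longrightarrow> A \<subseteq> T" shows "var_of \<Sigma> = A"
  unfolding var_of_def using assms by blast

lemma var_of_least: "is_eq_theory T \<Longrightarrow> \<Sigma> \<subseteq> T \<Longrightarrow> var_of \<Sigma> \<subseteq> T"
  unfolding var_of_def by blast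



definition SLT :: "(nat multiset \<times> nat multiset) set" where
  "SLT = {(u,v). u \<noteq> {#} \<and> v \<noteq> {#} \<and> set_mset u = set_mset v}"
definition NT :: "nat \<Rightarrow> (nat multiset \<times> nat multiset) set" where
  "NT k = {(u,v). u \<noteq> {#} \<and> v \<noteq> {#} \<and> (u = v \<or> (k \<le> size u \<and> k \<le> size v))}"
definition AT :: "nat \<Rightarrow> (nat multiset \<times> nat multiset) set" where
  "AT m = {(u,v). u \<noteq> {#} \<and> v \<noteq> {#} \<and> (\<forall>i. count u i mod m = count v i mod m)}"
definition zeroA :: "nat multiset \<Rightarrow> bool" where
  "zeroA u \<longleftrightarrow> 4 \<le> size u \<or> (\<exists>i. 2 \<le> count u i)"
definition ZT :: "(nat multiset \<times> nat multiset) set" where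
  "ZT = {(u,v). u \<noteq> {#} \<and> v \<noteq> {#} \<and> (u = v \<or> (zeroA u \<and> zeroA v))}"

lemma size_subst_ge: "(\<forall>i. \<sigma> i \<noteq> {#}) \<Longrightarrow> k \<le> size u \<Longrightarrow> k \<le> size (subst_word \<sigma> u)"
  by (meson order.trans size_subst)

lemma eq_SLT: "is_eq_theory SLT"
  unfolding is_eq_theory_def SLT_def
  by (intro conjI allI impI ballI; auto simp: set_subst subst_ne)

lemma eq_NT: "is_eq_theory (NT k)"
  unfolding is_eq_theory_def NT_def
  by (intro conjI allI impI ballI; auto simp: subst_ne size_subst_ge)

lemma count_subst_ge2: assumes "2 \<le> count u i" "\<forall>k. \<sigma> k \<noteq> {#}"
  shows "\<exists>j. 2 \<le> count (subst_word \<sigma> u) j"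
proof -
  have "0 < count u i" using assms(1) by linarith
  then have iu: "i \<in># u" by (simp only: count_greater_zero_iff)
  obtain r where r: "u = add_mset i r" using multi_member_split[OF iu] by iprover
  have "0 < count r i" using assms(1) r by simp
  then have ir: "i \<in># r" by (simp only: count_greater_zero_iff)
  obtain r' where r': "r = add_mset i r'" using multi_member_split[OF ir] by iprover
  obtain j where j: "j \<in># \<sigma> i" using assms(2) by blast
  have "subst_word \<sigma> u = \<sigma> i + \<sigma> i + subst_word \<sigma> r'" using r r' by simp
  moreover have "0 < count (\<sigma> i) j" using j by (simp only: count_greater_zero_iff)
  moreover have "count (subst_word \<sigma> u) j = count (\<sigma> i) j + count (\<sigma> i) j + count (subst_word \<sigma> r') j"
    using calculation(1) by simp
  ultimately have "count (subst_word \<sigma> u) j \<ge> 2" by linarith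
  then show ?thesis by blast
qed

lemma zeroA_add: "zeroA u \<Longrightarrow> zeroA (u + c)"
  unfolding zeroA_def by (auto, metis le_add1 order.trans count_union)
lemma zeroA_subst: "(\<forall>k. \<sigma> k \<noteq> {#}) \<Longrightarrow> zeroA u \<Longrightarrow> zeroA (subst_word \<sigma> u)"
  unfolding zeroA_def using size_subst_ge count_subst_ge2 by blast

lemma eq_ZT: "is_eq_theory ZT"
  unfolding is_eq_theory_def ZT_def
  by (intro conjI allI impI ballI; auto simp: subst_ne zeroA_add zeroA_subst add.commute[of _ c])

lemma mem_of_count: "0 < k \<Longrightarrow> k \<le> count d x \<Longrightarrow> x \<in># d"
proof -
  assume "0 < k" "k \<le> count d x"
  then have "0 < count d x" by linarith
  then show ?thesis by (simp only: count_greater_zero_iff)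
qed

lemma repeat_div: assumes "0 < m" "\<forall>i. m dvd count d i" shows "\<exists>a. d = repeat_mset m a"
proof -
  let ?f = "\<lambda>i. count d i div m"
  have fin: "finite {i. 0 < ?f i}"
    by (rule finite_subset[of _ "set_mset d"]) (use mem_of_count in \<open>auto simp: div_greater_zero_iff\<close>)
  have "count (repeat_mset m (Abs_multiset ?f)) i = count d i" for i
    using count_Abs_multiset[OF fin] assms by simp
  then show ?thesis by (intro exI[of _ "Abs_multiset ?f"]) (simp add: multiset_eq_iff)
qed

lemma mod_to_repeat: assumes m: "0<m" and h: "\<forall>i. count u i mod m = count v i mod m"
  shows "\<exists>a b. u + repeat_mset m a = v + repeat_mset m b"
proof -
  have d1: "\<forall>i. m dvd count (v - u) i"
  proof
    fix i show "m dvd count (v-u) i"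
    proof (cases "count u i \<le> count v i")
      case True then show ?thesis using h mod_eq_dvd_iff_nat[OF True, of m] by simp
    next
      case False then show ?thesis by simp
    qed
  qed
  have d2: "\<forall>i. m dvd count (u - v) i"
  proof
    fix i show "m dvd count (u-v) i"
    proof (cases "count v i \<le> count u i")
      case True then show ?thesis using h mod_eq_dvd_iff_nat[OF True, of m] by simp
    next
      case False then show ?thesis by simp
    qed
  qed
  obtain a where a: "v - u = repeat_mset m a" using repeat_div d1 m by blast
  obtain b where b: "u - v = repeat_mset m b" using repeat_div d2 m by blast
  have "u + (v - u) = v + (u - v)" unfolding multiset_eq_iff count_union count_diff by (intro allI) linarith
  then show ?thesis using a b by metis
qed

lemma repeat_to_mod: "u + repeat_mset m a = v + repeat_mset m b \<Longrightarrow> count u i mod m = count v i mod m"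
proof -
  assume "u + repeat_mset m a = v + repeat_mset m b"
  then have "count (u + repeat_mset m a) i = count (v + repeat_mset m b) i" by simp
  then have "count u i + m * count a i = count v i + m * count b i" by simp
  then have "(count u i + m * count a i) mod m = (count v i + m * count b i) mod m" by simp
  then show ?thesis by simp
qed

lemma eq_AT: assumes m: "0 < m" shows "is_eq_theory (AT m)"
  unfolding is_eq_theory_def
proof (intro conjI allI impI ballI)
  show "AT m \<subseteq> cwords \<times> cwords" unfolding AT_def by auto
  show "(w, w) \<in> AT m" if "w \<in> cwords" for w using that unfolding AT_def by auto
  show "(b, a) \<in> AT m" if "(a, b) \<in> AT m" for a b using that unfolding AT_def by auto
  show "(a, c) \<in> AT m" if "(a, b) \<in> AT m" "(b, c) \<in> AT m" for a b c using that unfolding AT_def by auto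
  show "(a + c, b + c) \<in> AT m" if "(a, b) \<in> AT m" "c \<in> cwords" for a b c
  proof -
    have h: "a\<noteq>{#}" "b \<noteq>{#}" "\<forall>i. count a i mod m = count b i mod m" "c \<noteq> {#}"
      using that unfolding AT_def by auto
    have "\<forall>i. (count a i + count c i) mod m = (count b i + count c i) mod m"
      using h(3) by (metis mod_add_cong)
    then show ?thesis using h unfolding AT_def by simp
  qed
  show "(subst_word \<sigma> a, subst_word \<sigma> b) \<in> AT m" if "\<forall>i. \<sigma> i \<in> cwords" "(a, b) \<in> AT m" for \<sigma> a b
  proof -
    have ne: "a \<noteq> {#}" "b \<noteq> {#}" and c: "\<forall>i. count a i mod m = count b i mod m"
      using that(2) unfolding AT_def by auto
    obtain wa wb where w: "a + repeat_mset m wa = b + repeat_mset m wb" using mod_to_repeat[OF m c] by blast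
    have "subst_word \<sigma> a + repeat_mset m (subst_word \<sigma> wa) = subst_word \<sigma> b + repeat_mset m (subst_word \<sigma> wb)"
      using arg_cong[OF w, of "subst_word \<sigma>"] by simp
    then show ?thesis using repeat_to_mod ne that(1) unfolding AT_def by (auto simp: subst_ne)
  qed
qed

section \<open>Identification of the varieties\<close>

lemma SL_absorb: assumes T: "is_eq_theory T" and g: "({#0,0#},{#0#}) \<in> T"
  and "set_mset w \<subseteq> set_mset u" "u \<noteq> {#}" "w \<noteq> {#}" shows "(u + w, u) \<in> T"
  using assms(3-5)
proof (induction w rule: multiset_induct)
  case empty then show ?case by simp
next
  case (add x w)
  have xu: "x \<in># u" using add.prems by auto
  then obtain r where r: "u = add_mset x r" using multi_member_split[OF xu] by iprover
  have idem: "({#x,x#},{#x#}) \<in> T"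
    using eqT_subst[OF T _ g, of "\<lambda>k. {#x#}"] by simp
  have one: "(u + {#x#}, u) \<in> T"
  proof (cases "r = {#}")
    case True then show ?thesis using idem r by simp
  next
    case False
    have "({#x,x#} + r,{#x#} + r) \<in> T" using eqT_addR[OF T idem False] .
    then show ?thesis using r by simp
  qed
  show ?case
  proof (cases "w = {#}")
    case True then show ?thesis using one by simp
  next
    case False
    have ih: "(u + w, u) \<in> T" using add.IH add.prems False by auto
    have "(u + w + {#x#}, u + {#x#}) \<in> T" using eqT_addR[OF T ih, of "{#x#}"] by simp
    then have "(u + add_mset x w, u + {#x#}) \<in> T" by simp
    then show ?thesis using one eqT_trans[OF T] by blast
  qed
qed

lemma SL_var_eq: "SL_var = SLT"
  unfolding SL_var_def
proof (rule var_of_eqI[OF eq_SLT])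
  show "{({#0, 0#}, {#0#})} \<subseteq> SLT" unfolding SLT_def by simp
  fix T assume T: "is_eq_theory T" and g: "{({#0, 0#}, {#0#})} \<subseteq> T"
  show "SLT \<subseteq> T"
  proof
    fix p assume "p \<in> SLT"
    then obtain u v where p: "p = (u,v)" "u \<noteq> {#}" "v \<noteq> {#}" "set_mset u = set_mset v"
      unfolding SLT_def by auto
    have 1: "(u + v, u) \<in> T" using SL_absorb[OF T _ _ p(2,3)] g p(4) by auto
    have 2: "(v + u, v) \<in> T" using SL_absorb[OF T _ _ p(3,2)] g p(4) by auto
    show "p \<in> T" using 1 2 p(1) by (metis T add.commute eqT_sym eqT_trans)
  qed
qed

lemma ZM_absorb: assumes T: "is_eq_theory T" and g: "({#0,1,2#},{#0,1#}) \<in> T"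
  and "2 \<le> size u" "v \<noteq> {#}" shows "(u + v, u) \<in> T"
proof -
  have "u \<noteq> {#}" using assms(3) by auto
  then obtain i where iu: "i \<in># u" by blast
  obtain r where r: "u = add_mset i r" using multi_member_split[OF iu] by iprover
  have rne: "r \<noteq> {#}" using assms(3) r by auto
  have "(subst_word (\<lambda>k. if k = 0 then {#i#} else if k = 1 then r else v) {#0,1,2#},
         subst_word (\<lambda>k. if k = 0 then {#i#} else if k = 1 then r else v) {#0,1#}) \<in> T"
    by (rule eqT_subst[OF T _ g]) (use rne assms(4) in auto)
  then show ?thesis using r by simp
qed

lemma ZM_var_eq: "ZM_var = NT 2"
  unfolding ZM_var_def
proof (rule var_of_eqI[OF eq_NT])
  show "{({#0, 1, 2#}, {#0, 1#})} \<subseteq> NT 2" unfolding NT_def by simp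
  fix T assume T: "is_eq_theory T" and g: "{({#0, 1, 2#}, {#0, 1#})} \<subseteq> T"
  show "NT 2 \<subseteq> T"
  proof
    fix p assume "p \<in> NT 2"
    then obtain u v where p: "p = (u,v)" "u \<noteq> {#}" "v \<noteq> {#}" "u = v \<or> (2 \<le> size u \<and> 2 \<le> size v)"
      unfolding NT_def by auto
    show "p \<in> T"
    proof (cases "u = v")
      case True then show ?thesis using p eqT_refl[OF T] by auto
    next
      case False
      then have s: "2 \<le> size u" "2 \<le> size v" using p by auto
      have 1: "(u + v, u) \<in> T" using ZM_absorb[OF T _ s(1) p(3)] g by auto
      have 2: "(v + u, v) \<in> T" using ZM_absorb[OF T _ s(2) p(2)] g by auto
      show "p \<in> T" using 1 2 p(1) by (metis T add.commute eqT_sym eqT_trans)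
    qed
  qed
qed

definition genA :: "nat \<Rightarrow> nat multiset \<times> nat multiset" where
  "genA m = (replicate_mset m 0 + {#1#}, {#1#})"

lemma A_absorb: assumes T: "is_eq_theory T" and g: "genA m \<in> T"
  and "z \<noteq> {#}" shows "(z + repeat_mset m w, z) \<in> T"
proof (cases "w = {#}")
  case True then show ?thesis using eqT_refl[OF T assms(3)] by simp
next
  case False
  have "(subst_word (\<lambda>k. if k = 0 then w else z) (replicate_mset m 0 + {#1#}),
         subst_word (\<lambda>k. if k = 0 then w else z) {#1#}) \<in> T"
    by (rule eqT_subst[OF T _ g[unfolded genA_def]]) (use False assms(3) in auto)
  then show ?thesis by (simp add: add.commute)
qed

lemma AT_sub: assumes T: "is_eq_theory T" and m: "0 < m" and g: "genA m \<in> T" shows "AT m \<subseteq> T"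
proof
  fix p assume "p \<in> AT m"
  then obtain u v where p: "p = (u,v)" "u \<noteq> {#}" "v \<noteq> {#}" "\<forall>i. count u i mod m = count v i mod m"
    unfolding AT_def by auto
  obtain a b where ab: "u + repeat_mset m a = v + repeat_mset m b" using mod_to_repeat[OF m p(4)] by blast
  have 1: "(u + repeat_mset m a, u) \<in> T" using A_absorb[OF T g p(2)] .
  have 2: "(v + repeat_mset m b, v) \<in> T" using A_absorb[OF T g p(3)] .
  show "p \<in> T" using 1 2 ab p(1) by (metis T eqT_sym eqT_trans)
qed

lemma genA_AT: "0 < m \<Longrightarrow> genA m \<in> AT m"
  unfolding genA_def AT_def by auto

lemma A_var_eq: assumes "0 < m" shows "A_var m = AT m"
  unfolding A_var_def
proof (rule var_of_eqI[OF eq_AT[OF assms]])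
  show "{(replicate_mset m 0 + {#1#}, {#1#})} \<subseteq> AT m" using genA_AT[OF assms] unfolding genA_def by simp
  fix T assume T: "is_eq_theory T" and g: "{(replicate_mset m 0 + {#1#}, {#1#})} \<subseteq> T"
  show "AT m \<subseteq> T" using AT_sub[OF T assms] g unfolding genA_def by simp
qed



abbreviation xp :: "nat \<Rightarrow> nat multiset" where "xp k \<equiv> replicate_mset k 0"
abbreviation yp :: "nat \<Rightarrow> nat multiset" where "yp k \<equiv> replicate_mset k 1"

lemma replicate_plus: "replicate_mset (m + n) x = replicate_mset m x + replicate_mset n x"
  by (simp add: multiset_eq_iff)
lemma repeat_replicate[simp]: "repeat_mset a (replicate_mset n x) = replicate_mset (a*n) x"
  by (simp add: multiset_eq_iff)

lemma eqT_addR0: "is_eq_theory T \<Longrightarrow> (a,b) \<in> T \<Longrightarrow> (a + c, b + c) \<in> T"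
  by (cases "c = {#}") (auto intro: eqT_addR)
lemma eqT_addL0: "is_eq_theory T \<Longrightarrow> (a,b) \<in> T \<Longrightarrow> (c + a, c + b) \<in> T"
  using eqT_addR0[of T a b c] by (simp add: add.commute)

lemma sub_mem: "A \<subseteq> T \<Longrightarrow> p \<in> A \<Longrightarrow> p \<in> T" by blast

lemma XY_Fth: "(X,Y) \<in> Fth" by (simp add: Fth_def)
lemma SLT_neF: "SLT \<noteq> Fth"
proof
  assume "SLT = Fth" then have "(X,Y) \<in> SLT" using XY_Fth by simp
  then show False unfolding SLT_def by simp
qed
lemma NT2_neF: "NT 2 \<noteq> Fth"
proof
  assume "NT 2 = Fth" then have "(X,Y) \<in> NT 2" using XY_Fth by simp
  then show False unfolding NT_def by simp
qed
lemma AT_neF: assumes "2 \<le> p" shows "AT p \<noteq> Fth"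
proof
  assume "AT p = Fth" then have "(X,Y) \<in> AT p" using XY_Fth by simp
  then have "count X 0 mod p = count Y 0 mod p" unfolding AT_def by blast
  then show False using assms by simp
qed
lemma AT_one: "AT 1 = Fth" by (auto simp: AT_def Fth_def)
lemma AT_mono: "d dvd e \<Longrightarrow> AT e \<subseteq> AT d"
  unfolding AT_def by (auto, metis mod_mod_cancel)

lemma AT_memI: "u \<noteq> {#} \<Longrightarrow> v \<noteq> {#} \<Longrightarrow> (\<And>k. count u k mod n = count v k mod n) \<Longrightarrow> (u,v) \<in> AT n"
  unfolding AT_def by auto

lemma stepA_aux: assumes T: "is_eq_theory T" and uv: "(u,v) \<in> T" and i: "i \<in># u" "i \<notin># v"
  shows "\<exists>a b c. 1 \<le> a \<and> 1 \<le> c \<and> (xp a + yp b, yp c) \<in> T"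
proof -
  have ne: "u \<noteq> {#}" "v \<noteq> {#}" using eqT_ne[OF T uv] by auto
  let ?\<sigma> = "\<lambda>k. if k = i then X else Y"
  have 1: "(subst_word ?\<sigma> u, subst_word ?\<sigma> v) \<in> T" by (rule eqT_subst[OF T _ uv]) auto
  have 2: "subst_word ?\<sigma> u = xp (count u i) + yp (size u - count u i)" by (simp add: subst_two)
  have 3: "subst_word ?\<sigma> v = yp (size v)" using i(2) by (simp add: subst_two not_in_iff)
  have 4: "1 \<le> count u i" using i(1) by (simp add: Suc_le_eq)
  have 5: "1 \<le> size v" using ne(2) by (simp add: Suc_le_eq nonempty_has_size)
  show ?thesis using 1 2 3 4 5 by metis
qed

lemma stepA: assumes T: "is_eq_theory T" and "\<not> T \<subseteq> SLT"
  shows "\<exists>a b c. 1 \<le> a \<and> 1 \<le> c \<and> (xp a + yp b, yp c) \<in> T"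
proof -
  obtain u v where uv: "(u,v) \<in> T" "(u,v) \<notin> SLT" using assms(2) by auto
  have ne: "u \<noteq> {#}" "v \<noteq> {#}" using eqT_ne[OF T uv(1)] by auto
  then have "set_mset u \<noteq> set_mset v" using uv(2) unfolding SLT_def by auto
  then obtain i where "(i \<in># u \<and> i \<notin># v) \<or> (i \<in># v \<and> i \<notin># u)" by blast
  then show ?thesis using stepA_aux[OF T uv(1)] stepA_aux[OF T eqT_sym[OF T uv(1)]] by blast
qed

lemma stepB: assumes T: "is_eq_theory T" and "\<not> T \<subseteq> NT 2"
  shows "T = Fth \<or> (\<exists>k\<ge>2. (X, xp k) \<in> T)"
proof -
  obtain u v where uv: "(u,v) \<in> T" "(u,v) \<notin> NT 2" using assms(2) by auto
  have ne: "u \<noteq> {#}" "v \<noteq> {#}" using eqT_ne[OF T uv(1)] by auto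
  have h: "u \<noteq> v" "size u < 2 \<or> size v < 2" using uv(2) ne unfolding NT_def by auto
  have key: "T = Fth \<or> (\<exists>k\<ge>2. (X, xp k) \<in> T)" if ab: "(a,b) \<in> T" "a \<noteq> b" "size a < 2" for a b
  proof -
    have ne2: "a \<noteq> {#}" "b \<noteq> {#}" using eqT_ne[OF T ab(1)] by auto
    then have "0 < size a" "0 < size b" by (simp_all add: nonempty_has_size)
    then have "size a = 1" using ab(3) by linarith
    then obtain i where a: "a = {#i#}" using size_1_singleton_mset by blast
    show ?thesis
    proof (cases "size b = 1")
      case True
      then obtain j where b: "b = {#j#}" using size_1_singleton_mset by blast
      then have ij: "i \<noteq> j" using a ab(2) by auto
      have "(subst_word (\<lambda>k. if k = i then X else Y) a, subst_word (\<lambda>k. if k = i then X else Y) b) \<in> T"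
        by (rule eqT_subst[OF T _ ab(1)]) auto
      then have "(X,Y) \<in> T" using a b ij by simp
      then show ?thesis using full_xy[OF T] by blast
    next
      case False
      then have b2: "2 \<le> size b" using \<open>0 < size b\<close> by linarith
      have "(subst_word (\<lambda>k. X) a, subst_word (\<lambda>k. X) b) \<in> T" by (rule eqT_subst[OF T _ ab(1)]) auto
      then have "(X, xp (size b)) \<in> T" using a by (simp add: subst_const)
      then show ?thesis using b2 by blast
    qed
  qed
  show ?thesis
  proof (cases "size u < 2")
    case True then show ?thesis using key[OF uv(1) h(1)] by blast
  next
    case False then have "size v < 2" using h by auto
    then show ?thesis using key[OF eqT_sym[OF T uv(1)]] h(1) by auto
  qed
qed

lemma per: assumes T: "is_eq_theory T" and g: "(X, xp (n+1)) \<in> T" and w: "w \<noteq> {#}" and E: "1 \<le> E"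
  shows "(repeat_mset E w, repeat_mset (E + n*M) w) \<in> T"
proof (induction M)
  case 0 show ?case using eqT_refl[OF T] w E by (simp add: repeat_mset_eq_empty_iff)
next
  case (Suc M)
  have b: "(w, repeat_mset (n+1) w) \<in> T"
    using eqT_subst[OF T _ g, of "\<lambda>k. w"] w by simp
  have 1: "(w + repeat_mset (E + n*M - 1) w, repeat_mset (n+1) w + repeat_mset (E + n*M - 1) w) \<in> T"
    using eqT_addR0[OF T b] .
  have e1: "E + n*M = Suc (E + n*M - 1)" using E by simp
  have 2: "w + repeat_mset (E + n*M - 1) w = repeat_mset (E + n*M) w"
    by (subst e1) simp
  have e2: "(n+1) + (E + n*M - 1) = E + n * Suc M" using E by simp
  have 3: "repeat_mset (n+1) w + repeat_mset (E + n*M - 1) w = repeat_mset (E + n*Suc M) w"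
    by (metis repeat_mset_distrib e2)
  show ?case using Suc.IH 1 2 3 eqT_trans[OF T] by metis
qed

lemma stepC: assumes T: "is_eq_theory T" and g: "(X, xp (n+1)) \<in> T" and n: "1 \<le> n"
  and h: "(xp a + yp b, yp c) \<in> T" and a: "1 \<le> a" and c: "1 \<le> c"
  shows "genA n \<in> T"
proof -
  have P: "(replicate_mset n j, replicate_mset (k*n) j) \<in> T" if "1 \<le> k" for j k
  proof -
    have "(repeat_mset n {#j#}, repeat_mset (n + n*(k-1)) {#j#}) \<in> T"
      using per[OF T g, of "{#j#}" n "k-1"] n by simp
    moreover have "n + n*(k-1) = k*n" using that by (cases k) auto
    ultimately show ?thesis by simp
  qed
  let ?\<sigma> = "\<lambda>k. if k = 0 then xp n else yp n"
  have "(subst_word ?\<sigma> (xp a + yp b), subst_word ?\<sigma> (yp c)) \<in> T"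
    by (rule eqT_subst[OF T _ h]) (use n in auto)
  then have h2: "(xp (a*n) + yp (b*n), yp (c*n)) \<in> T" by simp
  have Y1': "(repeat_mset 1 Y, repeat_mset (1 + n*1) Y) \<in> T" using per[OF T g, of Y 1 1] by simp
  have Y1: "(Y, yp (n+1)) \<in> T" using Y1' by (simp add: add.commute)
  have xa: "(xp (a*n), xp n) \<in> T" using P[OF a] eqT_sym[OF T] by blast
  have yc: "(yp (c*n), yp n) \<in> T" using P[OF c] eqT_sym[OF T] by blast
  have ynY: "yp n + Y = yp (n+1)" by simp
  show ?thesis
  proof (cases "b = 0")
    case True
    then have "(xp (a*n), yp (c*n)) \<in> T" using h2 by simp
    then have xy: "(xp n, yp n) \<in> T" using xa yc by (meson T eqT_sym eqT_trans)
    have "(xp n + Y, yp n + Y) \<in> T" using eqT_addR0[OF T xy] .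
    then have "(xp n + Y, yp (n+1)) \<in> T" by (simp only: ynY)
    then show ?thesis using Y1 unfolding genA_def by (meson T eqT_sym eqT_trans)
  next
    case False
    then have "1 \<le> b" by simp
    have yb: "(yp (b*n), yp n) \<in> T" using P[OF \<open>1 \<le> b\<close>] eqT_sym[OF T] by blast
    have "(xp (a*n) + yp (b*n), xp n + yp n) \<in> T" using eqT_add[OF T xa yb] .
    then have "(xp n + yp n, yp n) \<in> T" using h2 yc by (meson T eqT_sym eqT_trans)
    then have "(xp n + yp n + Y, yp n + Y) \<in> T" using eqT_addR0[OF T] by blast
    then have 1: "(xp n + yp (n+1), yp (n+1)) \<in> T" by (simp only: add.assoc ynY)
    have 2: "(xp n + Y, xp n + yp (n+1)) \<in> T" using eqT_addL0[OF T Y1] .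
    show ?thesis using 1 2 Y1 unfolding genA_def by (meson T eqT_sym eqT_trans)
  qed
qed

lemma Suc_mult_mod[simp]: "Suc (s * n) mod n = Suc 0 mod n"
  by (subst mod_Suc_eq[symmetric]) simp

lemma reduce: assumes T: "is_eq_theory T" and n: "0 < n" and A: "AT n \<subseteq> T" and uv: "(u,v) \<in> T"
  shows "(xp (count u i + (n-1) * count v i) + Y, Y) \<in> T"
proof -
  define a where "a = count u i"
  define c where "c = count v i"
  define s where "s = size u - a"
  define t where "t = size v - c"
  let ?\<sigma> = "\<lambda>k. if k = i then X else yp n"
  have "(subst_word ?\<sigma> u, subst_word ?\<sigma> v) \<in> T" by (rule eqT_subst[OF T _ uv]) (use n in auto)
  then have h: "(xp a + yp (s*n), xp c + yp (t*n)) \<in> T" unfolding a_def c_def s_def t_def by (simp add: subst_two)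
  then have h2: "(xp a + yp (s*n) + (xp ((n-1)*c) + Y), xp c + yp (t*n) + (xp ((n-1)*c) + Y)) \<in> T"
    using eqT_addR0[OF T] by blast
  have l: "(xp (a + (n-1)*c) + Y, xp a + yp (s*n) + (xp ((n-1)*c) + Y)) \<in> T"
  proof (rule sub_mem[OF A], rule AT_memI)
    fix k
    show "count (xp (a + (n - 1) * c) + Y) k mod n = count (xp a + yp (s * n) + (xp ((n - 1) * c) + Y)) k mod n"
      by (cases "k = 0"; cases "k = 1"; simp)
  qed auto
  have cc: "c + (n-1)*c = n*c" using n by (cases n) auto
  have r: "(xp c + yp (t*n) + (xp ((n-1)*c) + Y), Y) \<in> T"
  proof (rule sub_mem[OF A], rule AT_memI)
    fix k
    show "count (xp c + yp (t*n) + (xp ((n-1)*c) + Y)) k mod n = count Y k mod n"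
      using cc by (cases "k = 0"; cases "k = 1"; simp)
  qed auto
  show ?thesis using l h2 r unfolding a_def[symmetric] c_def[symmetric] by (meson T eqT_trans)
qed

definition Sset :: "(nat multiset \<times> nat multiset) set \<Rightarrow> nat multiset \<Rightarrow> nat set" where
  "Sset T w = {e. 1 \<le> e \<and> (xp e + w, w) \<in> T}"

lemma S_diff: assumes T: "is_eq_theory T" and e: "e1 \<in> Sset T w" "e2 \<in> Sset T w" "e2 < e1"
  shows "e1 - e2 \<in> Sset T w"
proof -
  let ?f = "e1 - e2"
  have h1: "(xp e1 + w, w) \<in> T" and h2: "(xp e2 + w, w) \<in> T" using e unfolding Sset_def by auto
  have "(xp ?f + (xp e2 + w), xp ?f + w) \<in> T" using eqT_addL0[OF T h2] .
  moreover have "xp ?f + (xp e2 + w) = xp e1 + w"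
    using e(3) by (metis add.assoc le_add_diff_inverse2 less_imp_le replicate_plus)
  ultimately have "(xp ?f + w, xp e1 + w) \<in> T" using eqT_sym[OF T] by metis
  then have "(xp ?f + w, w) \<in> T" using h1 eqT_trans[OF T] by blast
  then show ?thesis unfolding Sset_def using e(3) by auto
qed

lemma S_least: assumes T: "is_eq_theory T" and e: "e \<in> Sset T w"
  shows "(LEAST e. e \<in> Sset T w) \<in> Sset T w \<and> (\<forall>e'\<in>Sset T w. (LEAST e. e \<in> Sset T w) dvd e')"
proof -
  define d where "d = (LEAST e. e \<in> Sset T w)"
  have dS: "d \<in> Sset T w" unfolding d_def using e by (rule LeastI)
  have d1: "1 \<le> d" using dS unfolding Sset_def by auto
  have "d dvd e'" if e': "e' \<in> Sset T w" for e'
  proof (rule ccontr)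
    assume nd: "\<not> d dvd e'"
    have sub: "\<forall>k. k*d < e' \<longrightarrow> e' - k*d \<in> Sset T w"
    proof
      fix k show "k*d < e' \<longrightarrow> e' - k*d \<in> Sset T w"
      proof (induction k)
        case 0 then show ?case using e' by simp
      next
        case (Suc k)
        show ?case
        proof
          assume "Suc k * d < e'"
          then have "k*d < e'" "d < e' - k*d" by auto
          then have "e' - k*d \<in> Sset T w" using Suc.IH by blast
          then have "e' - k*d - d \<in> Sset T w" using S_diff[OF T _ dS \<open>d < e' - k*d\<close>] by blast
          then show "e' - Suc k * d \<in> Sset T w" by (simp add: diff_diff_add add.commute)
        qed
      qed
    qed
    have r: "e' mod d \<noteq> 0" by (metis nd dvd_eq_mod_eq_0)
    have "(e' div d) * d < e'" using r by (metis add_diff_cancel_left' diff_less_mono2 div_mult_mod_eq less_add_same_cancel1 mult.commute not_gr0 zero_less_diff)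
    then have "e' - (e' div d) * d \<in> Sset T w" using sub by blast
    moreover have "e' - (e' div d) * d = e' mod d" by (simp add: minus_div_mult_eq_mod)
    ultimately have "e' mod d \<in> Sset T w" by simp
    then have "d \<le> e' mod d" unfolding d_def by (rule Least_le)
    moreover have "e' mod d < d" using d1 by simp
    ultimately show False by simp
  qed
  then show ?thesis using dS unfolding d_def by blast
qed

lemma AT_class: assumes T: "is_eq_theory T" and n: "0 < n" and A: "AT n \<subseteq> T"
  shows "\<exists>d. 0 < d \<and> d dvd n \<and> T = AT d"
proof -
  define S where "S = Sset T Y"
  have nS: "n \<in> S" using genA_AT[OF n] A n unfolding S_def Sset_def genA_def by auto
  define d where "d = (LEAST e. e \<in> S)"
  have dS: "d \<in> S" and dd: "\<forall>e\<in>S. d dvd e" using S_least[OF T nS[unfolded S_def]] unfolding d_def S_def by auto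
  have d0: "0 < d" using dS unfolding S_def Sset_def by auto
  have sub1: "AT d \<subseteq> T" using AT_sub[OF T d0] dS unfolding S_def Sset_def genA_def by auto
  have sub2: "T \<subseteq> AT d"
  proof
    fix p assume p: "p \<in> T"
    obtain u v where puv: "p = (u,v)" by (cases p)
    have ne: "u \<noteq> {#}" "v \<noteq> {#}" using eqT_ne[OF T] p puv by auto
    have "count u i mod d = count v i mod d" for i
    proof -
      define e where "e = count u i + (n-1) * count v i"
      have r: "(xp e + Y, Y) \<in> T" using reduce[OF T n A] p puv unfolding e_def by simp
      have "d dvd e"
      proof (cases "e = 0")
        case True then show ?thesis by simp
      next
        case False then have "e \<in> S" using r unfolding S_def Sset_def by auto
        then show ?thesis using dd by blast
      qed
      then obtain q1 where q1: "e = d*q1" by blast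
      obtain q2 where q2: "n = d*q2" using dd nS by blast
      have "e + count v i = count u i + n * count v i" unfolding e_def using n by (cases n) (auto simp: algebra_simps)
      then have "count u i + d*(q2 * count v i) = count v i + d*q1" using q1 q2 by (simp add: algebra_simps)
      then have "(count u i + d*(q2 * count v i)) mod d = (count v i + d*q1) mod d" by simp
      then show ?thesis by simp
    qed
    then show "p \<in> AT d" using ne puv unfolding AT_def by auto
  qed
  show ?thesis using d0 dd nS sub1 sub2 by blast
qed

section \<open>Classification\<close>

lemma class_AT: assumes T: "is_eq_theory T" and "T \<noteq> Fth" "\<not> T \<subseteq> SLT" "\<not> T \<subseteq> NT 2"
  shows "\<exists>n>0. AT n \<subseteq> T"
proof -
  obtain k where k: "k \<ge> 2" "(X, xp k) \<in> T" using stepB[OF T assms(4)] assms(2) by blast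
  obtain a b c where abc: "1 \<le> a" "1 \<le> c" "(xp a + yp b, yp c) \<in> T" using stepA[OF T assms(3)] by blast
  have g: "(X, xp ((k-1)+1)) \<in> T" using k by simp
  have gA: "genA (k-1) \<in> T" using stepC[OF T g _ abc(3) abc(1) abc(2)] k by simp
  have k1: "0 < k-1" using k by simp
  show ?thesis using AT_sub[OF T k1 gA] k1 by blast
qed

lemma classify: assumes T: "is_eq_theory T" and "T \<noteq> Fth"
  shows "T \<subseteq> SLT \<or> T \<subseteq> NT 2 \<or> (\<exists>p. prime p \<and> T \<subseteq> AT p)"
proof (cases "T \<subseteq> SLT \<or> T \<subseteq> NT 2")
  case True then show ?thesis by blast
next
  case False
  then obtain n where n: "0 < n" "AT n \<subseteq> T" using class_AT[OF T assms(2)] by blast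
  then obtain d where d: "0 < d" "T = AT d" using AT_class[OF T] by blast
  then have "d \<noteq> 1" using assms(2) AT_one by auto
  then obtain p where "prime p" "p dvd d" using prime_factor_nat by blast
  then show ?thesis using AT_mono d by blast
qed

lemma max_SLT: assumes T: "is_eq_theory T" and "SLT \<subseteq> T" "T \<noteq> SLT" shows "T = Fth"
proof -
  have "\<not> T \<subseteq> SLT" using assms by blast
  then obtain a b c where abc: "1 \<le> a" "1 \<le> c" "(xp a + yp b, yp c) \<in> T" using stepA[OF T] by blast
  have yc: "(yp c, Y) \<in> T" using abc(2) by (intro sub_mem[OF assms(2)]) (simp add: SLT_def)
  show ?thesis
  proof (cases "b = 0")
    case True
    have xa: "(X, xp a) \<in> T" using abc(1) by (intro sub_mem[OF assms(2)]) (simp add: SLT_def)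
    have "(xp a, yp c) \<in> T" using abc(3) True by simp
    then have "(X, Y) \<in> T" using xa yc by (meson T eqT_trans)
    then show ?thesis using full_xy[OF T] by blast
  next
    case False
    have "(X + Y, xp a + yp b) \<in> T" using abc(1) False by (intro sub_mem[OF assms(2)]) (auto simp: SLT_def)
    then have "(X + Y, Y) \<in> T" using abc(3) yc by (meson T eqT_trans)
    then show ?thesis using full_xpy[OF T] by blast
  qed
qed

lemma max_NT2: assumes T: "is_eq_theory T" and "NT 2 \<subseteq> T" "T \<noteq> NT 2" shows "T = Fth"
proof -
  have "\<not> T \<subseteq> NT 2" using assms by blast
  then have "T = Fth \<or> (\<exists>k\<ge>2. (X, xp k) \<in> T)" using stepB[OF T] by blast
  then show ?thesis
  proof
    assume "\<exists>k\<ge>2. (X, xp k) \<in> T"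
    then obtain k where k: "k \<ge> 2" "(X, xp k) \<in> T" by blast
    have "(xp k, X + Y) \<in> T" using k(1) by (intro sub_mem[OF assms(2)]) (simp add: NT_def)
    then have 1: "(X, X + Y) \<in> T" using k(2) by (meson T eqT_trans)
    have "(subst_word (\<lambda>k. if k = 0 then Y else X) X, subst_word (\<lambda>k. if k = 0 then Y else X) (X + Y)) \<in> T"
      by (rule eqT_subst[OF T _ 1]) auto
    then have "(Y, X + Y) \<in> T" by (simp add: add.commute)
    then show ?thesis using full_xpy[OF T] eqT_sym[OF T] by blast
  qed
qed

lemma max_AT: assumes T: "is_eq_theory T" and p: "prime p" and "AT p \<subseteq> T" "T \<noteq> AT p" shows "T = Fth"
proof -
  have p0: "0 < p" using p prime_gt_0_nat by blast
  obtain d where d: "0 < d" "d dvd p" "T = AT d" using AT_class[OF T p0 assms(3)] by blast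
  then have "d = 1 \<or> d = p" using p by (simp add: prime_nat_iff)
  then show ?thesis using d assms(4) AT_one by auto
qed



definition isatom :: "(nat multiset \<times> nat multiset) set \<Rightarrow> bool" where
  "isatom x \<longleftrightarrow> x \<in> Com \<and> x \<noteq> Fth \<and> (\<forall>z\<in>Com. x \<subseteq> z \<longrightarrow> z = Fth \<or> z = x)"

definition P1 :: "(nat multiset \<times> nat multiset) set \<Rightarrow> bool" where
  "P1 x \<longleftrightarrow> (\<forall>y\<in>Com. y \<subseteq> x \<and> y \<noteq> x \<longrightarrow> (\<exists>b. isatom b \<and> y \<subseteq> b \<and> b \<noteq> x))"

definition P2 :: "(nat multiset \<times> nat multiset) set \<Rightarrow> bool" where
  "P2 x \<longleftrightarrow> (\<exists>y\<in>Com. y \<subseteq> x \<and> y \<noteq> x \<and> (\<forall>b. isatom b \<and> y \<subseteq> b \<longrightarrow> b = x) \<and>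
     (\<exists>z1\<in>Com. \<exists>z2\<in>Com. y \<subseteq> z1 \<and> y \<subseteq> z2 \<and> \<not> z1 \<subseteq> z2 \<and> \<not> z2 \<subseteq> z1))"

lemma Com_iff[simp]: "T \<in> Com \<longleftrightarrow> is_eq_theory T" by (simp add: Com_def)

lemma prime_ge2: "prime (p::nat) \<Longrightarrow> 2 \<le> p" using prime_ge_2_nat by blast

lemma genA_notSLT: "0 < p \<Longrightarrow> genA p \<notin> SLT"
  unfolding genA_def SLT_def by auto
lemma genA_notNT2: "0 < p \<Longrightarrow> genA p \<notin> NT 2"
  unfolding genA_def NT_def by auto

lemma AT_ne_SLT: "prime p \<Longrightarrow> AT p \<noteq> SLT"
  using genA_AT[of p] genA_notSLT[of p] prime_gt_0_nat by auto
lemma AT_ne_NT2: "prime p \<Longrightarrow> AT p \<noteq> NT 2"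
  using genA_AT[of p] genA_notNT2[of p] prime_gt_0_nat by auto
lemma ne_by_count: "count a i \<noteq> count b i \<Longrightarrow> a \<noteq> b" by auto

lemma SLT_ne_NT2: "SLT \<noteq> NT 2"
proof
  assume "SLT = NT 2"
  moreover have "(xp 2, X) \<in> SLT" by (simp add: SLT_def)
  moreover have "(xp 2, X) \<notin> NT 2" unfolding NT_def using ne_by_count[of "xp 2" 0 X] by simp
  ultimately show False by simp
qed
lemma genA_in_AT: assumes "genA m \<in> AT q" shows "q dvd m"
proof -
  have "count (fst (genA m)) 0 mod q = count (snd (genA m)) 0 mod q" using assms unfolding AT_def by auto
  then have "m mod q = 0" unfolding genA_def by simp
  then show ?thesis by (simp add: dvd_eq_mod_eq_0)
qed
lemma AT_inj: assumes "prime p" "prime q" "AT q = AT p" shows "q = p"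
proof -
  have "genA p \<in> AT q" using assms genA_AT[of p] prime_gt_0_nat by auto
  then have "q dvd p" by (rule genA_in_AT)
  then show ?thesis using assms by (metis prime_nat_iff prime_ge2 Suc_1 not_less_eq_eq order_refl)
qed

lemma atom_iff: "isatom x \<longleftrightarrow> x = SLT \<or> x = NT 2 \<or> (\<exists>p. prime p \<and> x = AT p)"
proof
  assume a: "isatom x"
  then have x: "is_eq_theory x" "x \<noteq> Fth" and m: "\<forall>z\<in>Com. x \<subseteq> z \<longrightarrow> z = Fth \<or> z = x"
    unfolding isatom_def by auto
  show "x = SLT \<or> x = NT 2 \<or> (\<exists>p. prime p \<and> x = AT p)"
    using classify[OF x] m eq_SLT eq_NT eq_AT SLT_neF NT2_neF AT_neF prime_ge2 prime_gt_0_nat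
    by (metis Com_iff)
next
  assume "x = SLT \<or> x = NT 2 \<or> (\<exists>p. prime p \<and> x = AT p)"
  then show "isatom x"
  proof (elim disjE exE conjE)
    assume "x = SLT" then show ?thesis unfolding isatom_def Com_def mem_Collect_eq using eq_SLT SLT_neF max_SLT by blast
  next
    assume "x = NT 2" then show ?thesis unfolding isatom_def Com_def mem_Collect_eq using eq_NT NT2_neF max_NT2 by blast
  next
    fix p assume p: "prime p" "x = AT p"
    have e: "is_eq_theory (AT p)" using eq_AT prime_gt_0_nat[OF p(1)] by blast
    have f: "AT p \<noteq> Fth" using AT_neF prime_ge2[OF p(1)] by blast
    have m: "\<And>T. is_eq_theory T \<Longrightarrow> AT p \<subseteq> T \<Longrightarrow> T \<noteq> AT p \<Longrightarrow> T = Fth" using max_AT p(1) by blast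
    show ?thesis unfolding isatom_def Com_def mem_Collect_eq p(2) using e f m by blast
  qed
qed

lemma diffD: assumes T: "is_eq_theory T" and g: "(X, xp (n+1)) \<in> T" and n: "1 \<le> n"
  and h: "(xp E1, xp E2) \<in> T" and E: "1 \<le> E1" "E1 < E2"
  shows "E2 - E1 \<in> Sset T X"
proof -
  define d where "d = E2 - E1"
  define R where "R = xp (1 + n*E1 - E1)"
  have nE: "E1 \<le> n*E1" using n by simp
  have 1: "(repeat_mset (1+d) X, repeat_mset (1 + d + n*E1) X) \<in> T" using per[OF T g, of X "1+d" E1] by simp
  have e1: "1 + d + n*E1 = E2 + (1 + n*E1 - E1)" using nE E unfolding d_def by arith
  have 2: "xp (1 + d + n*E1) = xp E2 + R" unfolding R_def by (subst e1) (rule replicate_plus)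
  have 3: "(xp E2 + R, xp E1 + R) \<in> T" using eqT_addR0[OF T eqT_sym[OF T h]] .
  have e2: "E1 + (1 + n*E1 - E1) = 1 + n*E1" using nE by arith
  have 4: "xp E1 + R = xp (1 + n*E1)" unfolding R_def by (metis e2 replicate_plus)
  have 5: "(repeat_mset 1 X, repeat_mset (1 + n*E1) X) \<in> T" using per[OF T g, of X 1 E1] by simp
  have 1: "(xp (1+d), xp (1+d+n*E1)) \<in> T" using 1 by (simp only: repeat_mset_replicate_mset)
  have 5: "(X, xp (1+n*E1)) \<in> T" using 5 by simp
  have a: "(xp (1+d), xp E2 + R) \<in> T" using 1 unfolding 2 .
  have b: "(xp E1 + R, X) \<in> T" using eqT_sym[OF T 5] unfolding 4[symmetric] .
  have "(xp (1+d), X) \<in> T" using eqT_trans[OF T eqT_trans[OF T a 3] b] .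
  moreover have "xp (1+d) = xp d + X" by simp
  moreover have "1 \<le> d" using E unfolding d_def by simp
  ultimately show ?thesis unfolding Sset_def d_def by auto
qed

lemma P1_SLT: "P1 SLT"
  unfolding P1_def
proof (intro ballI impI)
  fix y assume yC: "y \<in> Com" and ys: "y \<subseteq> SLT \<and> y \<noteq> SLT"
  have T: "is_eq_theory y" using yC by simp
  show "\<exists>b. isatom b \<and> y \<subseteq> b \<and> b \<noteq> SLT"
  proof (rule ccontr)
    assume nb: "\<not> ?thesis"
    have nN: "\<not> y \<subseteq> NT 2" using nb atom_iff SLT_ne_NT2 by metis
    have nA: "\<forall>p. prime p \<longrightarrow> \<not> y \<subseteq> AT p" using nb atom_iff AT_ne_SLT by metis
    have yF: "y \<noteq> Fth" using ys SLT_neF Fth_top[OF eq_SLT] by auto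
    obtain k where k: "k \<ge> 2" "(X, xp k) \<in> y" using stepB[OF T nN] yF by blast
    define n where "n = k - 1"
    have n: "1 \<le> n" using k unfolding n_def by simp
    have g: "(X, xp (n+1)) \<in> y" using k unfolding n_def by simp
    define D where "D = Sset y X"
    have nD: "n \<in> D" unfolding D_def Sset_def using n eqT_sym[OF T g] by simp
    define d where "d = (LEAST e. e \<in> D)"
    have dD: "d \<in> D" and dd: "\<forall>e\<in>D. d dvd e" using S_least[OF T nD[unfolded D_def]] unfolding d_def D_def by auto
    have "d = 1"
    proof (rule ccontr)
      assume "d \<noteq> 1"
      then obtain p where p: "prime p" "p dvd d" using prime_factor_nat by blast
      have pn: "p dvd n" using p(2) dd nD dvd_trans by blast
      have "\<not> y \<subseteq> AT p" using nA p(1) by blast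
      then obtain u v where uv: "(u,v) \<in> y" "(u,v) \<notin> AT p" by auto
      have ne: "u \<noteq> {#}" "v \<noteq> {#}" using eqT_ne[OF T uv(1)] by auto
      then obtain i where i: "count u i mod p \<noteq> count v i mod p" using uv(2) unfolding AT_def by auto
      let ?\<sigma> = "\<lambda>k. if k = i then X else xp n"
      have "(subst_word ?\<sigma> u, subst_word ?\<sigma> v) \<in> y" by (rule eqT_subst[OF T _ uv(1)]) (use n in auto)
      then have h: "(xp (count u i + (size u - count u i) * n), xp (count v i + (size v - count v i) * n)) \<in> y"
        by (simp add: subst_two replicate_plus)
      define E1 where "E1 = count u i + (size u - count u i) * n"
      define E2 where "E2 = count v i + (size v - count v i) * n"
      obtain q where q: "n = p*q" using pn by blast
      have m1: "E1 mod p = count u i mod p" unfolding E1_def q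
        by (metis mod_mult_self2 mult.commute mult.left_commute)
      have m2: "E2 mod p = count v i mod p" unfolding E2_def q
        by (metis mod_mult_self2 mult.commute mult.left_commute)
      have pos: "1 \<le> count w i + (size w - count w i) * n" if "w \<noteq> {#}" for w
      proof (cases "count w i = 0")
        case True
        then have "1 \<le> size w" using that by (simp add: Suc_le_eq nonempty_has_size)
        then show ?thesis using True n by simp
      next
        case False then show ?thesis by linarith
      qed
      have E1p: "1 \<le> E1" using pos[OF ne(1)] unfolding E1_def .
      have E2p: "1 \<le> E2" using pos[OF ne(2)] unfolding E2_def .
      have h': "(xp E1, xp E2) \<in> y" using h unfolding E1_def E2_def .
      have neq: "E1 mod p \<noteq> E2 mod p" using m1 m2 i by simp
      show False
      proof (cases "E1 < E2")
        case True
        have "E2 - E1 \<in> D" using diffD[OF T g n h' E1p True] unfolding D_def .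
        then have "d dvd E2 - E1" using dd by blast
        then have "p dvd E2 - E1" using p(2) dvd_trans by blast
        then have "E2 mod p = E1 mod p" using mod_eq_dvd_iff_nat[of E1 E2 p] True by simp
        then show False using neq by simp
      next
        case False
        then have "E2 < E1" using neq by (metis linorder_neqE_nat)
        have "E1 - E2 \<in> D" using diffD[OF T g n eqT_sym[OF T h'] E2p \<open>E2 < E1\<close>] unfolding D_def .
        then have "d dvd E1 - E2" using dd by blast
        then have "p dvd E1 - E2" using p(2) dvd_trans by blast
        then have "E1 mod p = E2 mod p" using mod_eq_dvd_iff_nat[of E2 E1 p] \<open>E2 < E1\<close> by simp
        then show False using neq by simp
      qed
    qed
    then have "1 \<in> D" using dD by simp
    then have "({#0,0#},{#0#}) \<in> y" unfolding D_def Sset_def by simp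
    then have "SLT \<subseteq> y" using var_of_least[OF T, of "{({#0, 0#}, {#0#})}"] SL_var_eq unfolding SL_var_def by simp
    then show False using ys by blast
  qed
qed

lemma NT4_atoms: assumes "isatom b" "NT 4 \<subseteq> b" shows "b = NT 2"
proof -
  have "b = SLT \<or> b = NT 2 \<or> (\<exists>p. prime p \<and> b = AT p)" using assms(1) atom_iff by blast
  moreover have "b \<noteq> SLT"
  proof
    assume "b = SLT"
    moreover have "(xp 4, yp 4) \<in> NT 4" by (simp add: NT_def)
    moreover have "(xp 4, yp 4) \<notin> SLT" by (simp add: SLT_def)
    ultimately show False using assms(2) by blast
  qed
  moreover have "b \<noteq> AT p" if p: "prime p" for p
  proof
    assume "b = AT p"
    moreover have "(xp 4, xp 5) \<in> NT 4" by (simp add: NT_def)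
    ultimately have "(xp 4, xp 5) \<in> AT p" using assms(2) by blast
    then have "count (xp 4) 0 mod p = count (xp 5) 0 mod p" unfolding AT_def by blast
    then have "(5::nat) mod p = 4 mod p" by simp
    then have "p dvd 5 - 4" using mod_eq_dvd_iff_nat[of 4 5 p] by simp
    then show False using p by simp
  qed
  ultimately show ?thesis by blast
qed

lemma NT4_sub: "NT 4 \<subseteq> NT 2" unfolding NT_def by auto
lemma NT4_ne: "NT 4 \<noteq> NT 2"
proof
  assume "NT 4 = NT 2"
  moreover have "(xp 2, X + Y) \<in> NT 2" by (simp add: NT_def)
  moreover have "(xp 2, X + Y) \<notin> NT 4" unfolding NT_def using ne_by_count[of "xp 2" 0 "X+Y"] by simp
  ultimately show False by simp
qed

lemma not_P1_NT2: "\<not> P1 (NT 2)"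
  unfolding P1_def using eq_NT[of 4] NT4_sub NT4_ne NT4_atoms by auto

lemma P2_NT2: "P2 (NT 2)"
proof -
  have a1: "NT 4 \<subseteq> NT 2" "NT 4 \<noteq> NT 2" by (rule NT4_sub, rule NT4_ne)
  have a2: "\<forall>b. isatom b \<and> NT 4 \<subseteq> b \<longrightarrow> b = NT 2" using NT4_atoms by blast
  have a3: "NT 4 \<in> Com" "ZT \<in> Com" "NT 3 \<in> Com" using eq_NT eq_ZT by simp_all
  have a4: "NT 4 \<subseteq> ZT" unfolding NT_def ZT_def zeroA_def by auto
  have a5: "NT 4 \<subseteq> NT 3" unfolding NT_def by auto
  have a6: "\<not> ZT \<subseteq> NT 3"
  proof
    assume "ZT \<subseteq> NT 3"
    moreover have "(xp 2, yp 2) \<in> ZT" unfolding ZT_def zeroA_def by auto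
    moreover have "(xp 2, yp 2) \<notin> NT 3" unfolding NT_def using ne_by_count[of "xp 2" 0 "yp 2"] by simp
    ultimately show False by blast
  qed
  have a7: "\<not> NT 3 \<subseteq> ZT"
  proof
    assume "NT 3 \<subseteq> ZT"
    moreover have "({#0,1,2#}, {#0,1,3#}) \<in> NT 3" unfolding NT_def by auto
    moreover have "\<not> zeroA {#0,1,2::nat#}" unfolding zeroA_def by auto
    moreover have "({#0,1,2#}, {#0,1,3#}) \<in> ZT \<Longrightarrow> zeroA {#0,1,2::nat#}" unfolding ZT_def by auto
    ultimately show False by blast
  qed
  show ?thesis unfolding P2_def using a1 a2 a3 a4 a5 a6 a7 by blast
qed

lemma ATpp_atoms: assumes p: "prime p" and "isatom b" "AT (p*p) \<subseteq> b" shows "b = AT p"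
proof -
  have pp: "0 < p*p" using p prime_gt_0_nat by simp
  have gin: "genA (p*p) \<in> b" using assms(3) genA_AT[OF pp] by blast
  have "b = SLT \<or> b = NT 2 \<or> (\<exists>q. prime q \<and> b = AT q)" using assms(2) atom_iff by blast
  moreover have "b \<noteq> SLT" using gin genA_notSLT[OF pp] by blast
  moreover have "b \<noteq> NT 2" using gin genA_notNT2[OF pp] by blast
  moreover have "q = p" if q: "prime q" "b = AT q" for q
  proof -
    have "q dvd p*p" using gin q(2) genA_in_AT by blast
    then have "q dvd p" using q(1) by (meson prime_dvd_mult_iff)
    then show ?thesis using p q(1) by (metis prime_nat_iff prime_ge2 Suc_1 not_less_eq_eq order_refl)
  qed
  ultimately show ?thesis by blast
qed

lemma not_P1_AT: assumes p: "prime p" shows "\<not> P1 (AT p)"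
proof
  assume P: "P1 (AT p)"
  have pp: "0 < p*p" using p prime_gt_0_nat by simp
  have sub: "AT (p*p) \<subseteq> AT p" by (rule AT_mono) simp
  have ne: "AT (p*p) \<noteq> AT p"
  proof
    assume "AT (p*p) = AT p"
    then have "genA p \<in> AT (p*p)" using genA_AT[of p] prime_gt_0_nat[OF p] by simp
    then have "p*p dvd p" by (rule genA_in_AT)
    then show False using p prime_ge2[OF p]
      by (metis dvd_imp_le less_le_trans mult_le_cancel1 nat_mult_1_right not_less_eq_eq one_le_numeral prime_gt_0_nat Suc_1 nat_less_le)
  qed
  have C: "AT (p*p) \<in> Com" using eq_AT[OF pp] by simp
  have "\<exists>b. isatom b \<and> AT (p*p) \<subseteq> b \<and> b \<noteq> AT p"
    using P C sub ne unfolding P1_def by blast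
  then obtain b where "isatom b" "AT (p*p) \<subseteq> b" "b \<noteq> AT p" by blast
  then show False using ATpp_atoms[OF p] by blast
qed

lemma primepow_of: fixes m :: nat assumes p: "prime p" shows "0 < m \<Longrightarrow> (\<forall>q. prime q \<and> q dvd m \<longrightarrow> q = p) \<Longrightarrow> \<exists>k. m = p^k"
proof (induction m rule: less_induct)
  case (less m)
  show ?case
  proof (cases "m = 1")
    case True then show ?thesis by (intro exI[of _ 0]) simp
  next
    case False
    then obtain q where q: "prime q" "q dvd m" using prime_factor_nat by blast
    then have "q = p" using less.prems by blast
    then obtain m' where m': "m = p * m'" using q by blast
    have "0 < m'" using less.prems(1) m' by simp
    moreover have "m' < m" using m' p less.prems(1) prime_ge2[OF p] by simp
    moreover have "\<forall>q. prime q \<and> q dvd m' \<longrightarrow> q = p" using less.prems(2) m' by auto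
    ultimately obtain k where "m' = p^k" using less.IH by blast
    then show ?thesis using m' by (intro exI[of _ "Suc k"]) simp
  qed
qed

lemma not_P2_AT: assumes p: "prime p" shows "\<not> P2 (AT p)"
proof
  assume "P2 (AT p)"
  then obtain y where yC0: "y \<in> Com" and ys: "y \<subseteq> AT p" "y \<noteq> AT p"
    and only: "\<forall>b. isatom b \<and> y \<subseteq> b \<longrightarrow> b = AT p"
    and zz: "\<exists>z1\<in>Com. \<exists>z2\<in>Com. y \<subseteq> z1 \<and> y \<subseteq> z2 \<and> \<not> z1 \<subseteq> z2 \<and> \<not> z2 \<subseteq> z1"
    unfolding P2_def by blast
  then obtain z1 z2 where z0: "z1 \<in> Com" "z2 \<in> Com" and z: "y \<subseteq> z1" "y \<subseteq> z2" "\<not> z1 \<subseteq> z2" "\<not> z2 \<subseteq> z1"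
    by blast
  have yC: "is_eq_theory y" using yC0 by simp
  have zC: "is_eq_theory z1" "is_eq_theory z2" using z0 by simp_all
  have p0: "0 < p" using p prime_gt_0_nat by blast
  have yF: "y \<noteq> Fth" using ys AT_neF[OF prime_ge2[OF p]] Fth_top[OF eq_AT[OF p0]] by auto
  have nS: "\<not> y \<subseteq> SLT" using only atom_iff AT_ne_SLT[OF p] by metis
  have nN: "\<not> y \<subseteq> NT 2" using only atom_iff AT_ne_NT2[OF p] by metis
  obtain n where n: "0 < n" "AT n \<subseteq> y" using class_AT[OF yC yF nS nN] by blast
  obtain m where m: "0 < m" "y = AT m" using AT_class[OF yC n] by blast
  have "\<forall>q. prime q \<and> q dvd m \<longrightarrow> q = p"
  proof (intro allI impI)
    fix q assume q: "prime q \<and> q dvd m"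
    then have "AT m \<subseteq> AT q" using AT_mono by blast
    then have "AT q = AT p" using only atom_iff q m(2) by blast
    then show "q = p" using AT_inj p q by blast
  qed
  then obtain k where k: "m = p^k" using primepow_of[OF p m(1)] by blast
  obtain d1 where d1: "0 < d1" "d1 dvd m" "z1 = AT d1" using AT_class[OF zC(1) m(1)] z(1) m(2) by blast
  obtain d2 where d2: "0 < d2" "d2 dvd m" "z2 = AT d2" using AT_class[OF zC(2) m(1)] z(2) m(2) by blast
  obtain i where i: "d1 = p^i" using d1(2) k divides_primepow_nat[OF p] by blast
  obtain j where j: "d2 = p^j" using d2(2) k divides_primepow_nat[OF p] by blast
  show False
  proof (cases "i \<le> j")
    case True
    then have "d1 dvd d2" using i j by (simp add: le_imp_power_dvd)
    then have "z2 \<subseteq> z1" using d1 d2 AT_mono by blast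
    then show False using z by blast
  next
    case False
    then have "d2 dvd d1" using i j by (simp add: le_imp_power_dvd)
    then have "z1 \<subseteq> z2" using d1 d2 AT_mono by blast
    then show False using z by blast
  qed
qed

lemma not_P2_SLT: "\<not> P2 SLT"
  using P1_SLT unfolding P1_def P2_def by (metis Com_iff)



abbreviation sat :: "(nat \<Rightarrow> (nat multiset \<times> nat multiset) set) \<Rightarrow> lform \<Rightarrow> bool" where
  "sat \<equiv> fsat Com com_join com_meet"

definition leF :: "nat \<Rightarrow> nat \<Rightarrow> lform" where "leF a b = FEq (LJoin (LVar a) (LVar b)) (LVar b)"
definition impF :: "lform \<Rightarrow> lform \<Rightarrow> lform" where "impF f g = FOr (FNot f) g"
definition botF :: "nat \<Rightarrow> nat \<Rightarrow> lform" where "botF v w = FAll w (leF v w)"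
definition atomF :: "nat \<Rightarrow> nat \<Rightarrow> nat \<Rightarrow> lform" where
  "atomF v w1 w2 = FAnd (FNot (botF v w1)) (FAll w1 (impF (leF w1 v) (FOr (botF w1 w2) (FEq (LVar w1) (LVar v)))))"

definition P1F :: lform where
  "P1F = FAll 1 (impF (FAnd (leF 0 1) (FNot (FEq (LVar 1) (LVar 0))))
      (FEx 2 (FAnd (atomF 2 3 4) (FAnd (leF 2 1) (FNot (FEq (LVar 2) (LVar 0)))))))"

definition P2F :: lform where
  "P2F = FEx 1 (FAnd (leF 0 1) (FAnd (FNot (FEq (LVar 1) (LVar 0)))
     (FAnd (FAll 2 (impF (FAnd (atomF 2 3 4) (leF 2 1)) (FEq (LVar 2) (LVar 0))))
       (FEx 5 (FEx 6 (FAnd (leF 5 1) (FAnd (leF 6 1) (FAnd (FNot (leF 6 5)) (FNot (leF 5 6))))))))))"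

lemma sat_le[simp]: "sat e (leF a b) \<longleftrightarrow> e b \<subseteq> e a"
  unfolding leF_def com_join_def by auto
lemma sat_imp[simp]: "sat e (impF f g) \<longleftrightarrow> (sat e f \<longrightarrow> sat e g)"
  unfolding impF_def by simp

lemma Fth_Com: "Fth \<in> Com" using eqT_Fth by simp

lemma sat_bot[simp]: assumes "e v \<in> Com" "v \<noteq> w" shows "sat e (botF v w) \<longleftrightarrow> e v = Fth"
proof -
  have "sat e (botF v w) \<longleftrightarrow> (\<forall>a\<in>Com. a \<subseteq> e v)" unfolding botF_def using assms(2) by simp
  also have "\<dots> \<longleftrightarrow> e v = Fth" using Fth_Com Fth_top assms(1) by (auto simp: Com_def)
  finally show ?thesis .
qed

lemma sat_atom[simp]: assumes "e v \<in> Com" "w1 \<noteq> v" "w2 \<noteq> v" "w2 \<noteq> w1"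
  shows "sat e (atomF v w1 w2) \<longleftrightarrow> isatom (e v)"
proof -
  have "sat e (atomF v w1 w2) \<longleftrightarrow> e v \<noteq> Fth \<and> (\<forall>z\<in>Com. e v \<subseteq> z \<longrightarrow> z = Fth \<or> z = e v)"
    unfolding atomF_def using assms by simp
  then show ?thesis unfolding isatom_def using assms(1) by blast
qed

lemma atom_Com: "isatom b \<Longrightarrow> b \<in> Com" unfolding isatom_def by blast
lemma ex_atom: "(\<exists>b\<in>Com. isatom b \<and> Q b) \<longleftrightarrow> (\<exists>b. isatom b \<and> Q b)"
  using atom_Com by blast
lemma all_atom: "(\<forall>b\<in>Com. isatom b \<and> Q b \<longrightarrow> R b) \<longleftrightarrow> (\<forall>b. isatom b \<and> Q b \<longrightarrow> R b)"
  using atom_Com by blast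

lemma sat_P1: assumes "e 0 \<in> Com" shows "sat e P1F \<longleftrightarrow> P1 (e 0)"
proof -
  have "sat e P1F \<longleftrightarrow> (\<forall>y\<in>Com. y \<subseteq> e 0 \<and> y \<noteq> e 0 \<longrightarrow> (\<exists>b\<in>Com. isatom b \<and> y \<subseteq> b \<and> b \<noteq> e 0))"
    unfolding P1F_def by simp
  also have "\<dots> \<longleftrightarrow> P1 (e 0)" unfolding P1_def ex_atom ..
  finally show ?thesis .
qed

lemma sat_P2: assumes "e 0 \<in> Com" shows "sat e P2F \<longleftrightarrow> P2 (e 0)"
proof -
  have "sat e P2F \<longleftrightarrow> (\<exists>y\<in>Com. y \<subseteq> e 0 \<and> y \<noteq> e 0 \<and> (\<forall>b\<in>Com. isatom b \<and> y \<subseteq> b \<longrightarrow> b = e 0) \<and>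
     (\<exists>z1\<in>Com. \<exists>z2\<in>Com. y \<subseteq> z1 \<and> y \<subseteq> z2 \<and> \<not> z1 \<subseteq> z2 \<and> \<not> z2 \<subseteq> z1))"
    unfolding P2F_def by simp
  also have "\<dots> \<longleftrightarrow> P2 (e 0)" unfolding P2_def all_atom ..
  finally show ?thesis .
qed

definition phiSL where "phiSL = FAnd (atomF 0 1 2) P1F"
definition phiZM where "phiZM = FAnd (atomF 0 1 2) P2F"
definition phiA where "phiA = FAnd (atomF 0 1 2) (FAnd (FNot P1F) (FNot P2F))"

lemma fv: "fvars phiSL \<subseteq> {0}" "fvars phiZM \<subseteq> {0}" "fvars phiA \<subseteq> {0}"
  unfolding phiSL_def phiZM_def phiA_def P1F_def P2F_def atomF_def botF_def leF_def impF_def by auto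

lemma char_SL: "isatom x \<and> P1 x \<longleftrightarrow> x = SLT"
proof
  assume h: "isatom x \<and> P1 x"
  then have "x = SLT \<or> x = NT 2 \<or> (\<exists>p. prime p \<and> x = AT p)" using atom_iff by blast
  then show "x = SLT" using h not_P1_NT2 not_P1_AT by blast
next
  assume "x = SLT" then show "isatom x \<and> P1 x" using atom_iff P1_SLT by blast
qed
lemma char_ZM: "isatom x \<and> P2 x \<longleftrightarrow> x = NT 2"
proof
  assume h: "isatom x \<and> P2 x"
  then have "x = SLT \<or> x = NT 2 \<or> (\<exists>p. prime p \<and> x = AT p)" using atom_iff by blast
  then show "x = NT 2" using h not_P2_SLT not_P2_AT by blast
next
  assume "x = NT 2" then show "isatom x \<and> P2 x" using atom_iff P2_NT2 by blast
qed
lemma char_A: "isatom x \<and> \<not> P1 x \<and> \<not> P2 x \<longleftrightarrow> (\<exists>p. prime p \<and> x = AT p)"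
proof
  assume h: "isatom x \<and> \<not> P1 x \<and> \<not> P2 x"
  then have "x = SLT \<or> x = NT 2 \<or> (\<exists>p. prime p \<and> x = AT p)" using atom_iff by blast
  then show "\<exists>p. prime p \<and> x = AT p" using h P1_SLT P2_NT2 by blast
next
  assume "\<exists>p. prime p \<and> x = AT p"
  then obtain p where p: "prime p" "x = AT p" by blast
  then show "isatom x \<and> \<not> P1 x \<and> \<not> P2 x" using atom_iff not_P1_AT not_P2_AT by blast
qed

lemma Avar_set: "{A_var p | p::nat. prime p} = {AT p | p. prime p}"
proof -
  have h: "\<And>p. prime p \<Longrightarrow> A_var p = AT p" using A_var_eq prime_gt_0_nat by blast
  show ?thesis by (rule Collect_cong) (metis h)
qed

theorem mainTheorem10:
  shows "definable Com com_join com_meet {A_var p | p::nat. prime p}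
       \<and> definable Com com_join com_meet {SL_var}
       \<and> definable Com com_join com_meet {ZM_var}"
proof (intro conjI)
  show "definable Com com_join com_meet {A_var p | p::nat. prime p}"
    unfolding definable_def Avar_set
  proof (intro conjI exI[of _ phiA] allI impI)
    show "{AT p | p. prime p} \<subseteq> Com" using eq_AT prime_gt_0_nat by auto
    show "fvars phiA \<subseteq> {0}" by (rule fv)
    fix e :: "nat \<Rightarrow> _" assume "\<forall>i. e i \<in> Com"
    then have e0: "e 0 \<in> Com" by blast
    show "sat e phiA \<longleftrightarrow> e 0 \<in> {AT p | p. prime p}"
      unfolding phiA_def using e0 sat_P1[of e, OF e0] sat_P2[of e, OF e0] char_A[of "e 0"] by (simp, blast)
  qed
  show "definable Com com_join com_meet {SL_var}"
    unfolding definable_def SL_var_eq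
  proof (intro conjI exI[of _ phiSL] allI impI)
    show "{SLT} \<subseteq> Com" using eq_SLT by auto
    show "fvars phiSL \<subseteq> {0}" by (rule fv)
    fix e :: "nat \<Rightarrow> _" assume "\<forall>i. e i \<in> Com"
    then have e0: "e 0 \<in> Com" by blast
    show "sat e phiSL \<longleftrightarrow> e 0 \<in> {SLT}"
      unfolding phiSL_def using e0 sat_P1[of e, OF e0] char_SL[of "e 0"] by simp
  qed
  show "definable Com com_join com_meet {ZM_var}"
    unfolding definable_def ZM_var_eq
  proof (intro conjI exI[of _ phiZM] allI impI)
    show "{NT 2} \<subseteq> Com" using eq_NT by auto
    show "fvars phiZM \<subseteq> {0}" by (rule fv)
    fix e :: "nat \<Rightarrow> _" assume "\<forall>i. e i \<in> Com"
    then have e0: "e 0 \<in> Com" by blast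
    show "sat e phiZM \<longleftrightarrow> e 0 \<in> {NT 2}"
      unfolding phiZM_def using e0 sat_P2[of e, OF e0] char_ZM[of "e 0"] by simp
  qed
qed

end
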